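(* Let $C=w_1-\dots-w_m$ be a chain with $m\ge 2$ edges and positive weights. Then $C$ is extremal iff there is no admissible decomposition of $C$ into two subchains.
   Context: For a chain $C'=v_1-\dots-v_r$ ($r\ge 2$, positive weights): $L_1(C')=\max\{\sum_{i=1}^r v_ix_i : x\in\mathbb{R}^r,\ x_i^2+x_{i+1}^2\le 1\ \forall\,1\le i\le r-1\}$; $L_\emptyset(C')=\sqrt{(\sum_{i\text{ odd}}v_i)^2+(\sum_{i\text{ even}}v_i)^2}$; $C'$ is extremal if $L_1(C')=L_\emptyset(C')$. A decomposition of $C$ into $p+1$ subchains is given by integers $0=i_0<i_1<\dots<i_p<i_{p+1}=m$, with $C_j=w_{i_{j-1}+1}-\dots-w_{i_j}$. Let $\tilde\Sigma_{\rm odd}(C_j)=\sum\{w_i : i_{j-1}<i\le i_j,\ i\text{ odd}\}$, $\tilde\Sigma_{\rm even}(C_j)=\sum\{w_i : i_{j-1}<i\le i_j,\ i\text{ even}\}$ (parity with respect to the numbering in $C$), and $\Delta_j=\tilde\Sigma_{\rm even}(C_j)\tilde\Sigma_{\rm odd}(C_{j+1})-\tilde\Sigma_{\rm even}(C_{j+1})\tilde\Sigma_{\rm odd}(C_j)$ for $1\le j\le p$. The decomposition is admissible if every $C_j$ has at least two edges and, for every $1\le j\le p$, $\Delta_j<0$ when $i_j$ is even and $\Delta_j>0$ when $i_j$ is odd. *)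

theory Defs
  imports Complex_Main
begin

text \<open>A chain v_1 - ... - v_r is represented by a weight function v :: nat => real
  (only the values at indices 1..r matter) together with its number of edges r.\<close>

definition L1 :: "(nat \<Rightarrow> real) \<Rightarrow> nat \<Rightarrow> real" where
  "L1 v r = Sup {(\<Sum>i=1..r. v i * x i) | x :: nat \<Rightarrow> real.
                   \<forall>i. 1 \<le> i \<and> i \<le> r - 1 \<longrightarrow> (x i)\<^sup>2 + (x (i+1))\<^sup>2 \<le> 1}"

definition Lempty :: "(nat \<Rightarrow> real) \<Rightarrow> nat \<Rightarrow> real" where
  "Lempty v r = sqrt ((\<Sum>i\<in>{i\<in>{1..r}. odd i}. v i)\<^sup>2 + (\<Sum>i\<in>{i\<in>{1..r}. even i}. v i)\<^sup>2)"

definition extremal :: "(nat \<Rightarrow> real) \<Rightarrow> nat \<Rightarrow> bool" where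
  "extremal v r \<longleftrightarrow> L1 v r = Lempty v r"

text \<open>Parity sums of the subchain C_j = w_{a+1} - ... - w_b, parity taken w.r.t. the numbering in C.\<close>

definition sigma_odd :: "(nat \<Rightarrow> real) \<Rightarrow> nat \<Rightarrow> nat \<Rightarrow> real" where
  "sigma_odd w a b = (\<Sum>i\<in>{i\<in>{a<..b}. odd i}. w i)"

definition sigma_even :: "(nat \<Rightarrow> real) \<Rightarrow> nat \<Rightarrow> nat \<Rightarrow> real" where
  "sigma_even w a b = (\<Sum>i\<in>{i\<in>{a<..b}. even i}. w i)"

text \<open>Decomposition of C = w_1 - ... - w_m into p+1 subchains, given by cut points
  0 = c 0 < c 1 < ... < c p < c (p+1) = m; subchain C_j is indexed by {c (j-1) <.. c j}.\<close>

definition Delta :: "(nat \<Rightarrow> real) \<Rightarrow> (nat \<Rightarrow> nat) \<Rightarrow> nat \<Rightarrow> real" where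
  "Delta w c j = sigma_even w (c (j-1)) (c j) * sigma_odd w (c j) (c (j+1))
               - sigma_even w (c j) (c (j+1)) * sigma_odd w (c (j-1)) (c j)"

definition admissible_decomp :: "(nat \<Rightarrow> real) \<Rightarrow> nat \<Rightarrow> nat \<Rightarrow> (nat \<Rightarrow> nat) \<Rightarrow> bool" where
  "admissible_decomp w m p c \<longleftrightarrow>
     c 0 = 0 \<and> c (p+1) = m \<and> (\<forall>j\<le>p. c j < c (j+1)) \<and>
     (\<forall>j\<in>{1..p+1}. c j - c (j-1) \<ge> 2) \<and>
     (\<forall>j\<in>{1..p}. (even (c j) \<longrightarrow> Delta w c j < 0) \<and> (odd (c j) \<longrightarrow> Delta w c j > 0))"

end

theory Submission
  imports Defs
begin

lemma sig_split:
  assumes "a \<le> b" "b \<le> c"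
  shows "sigma_odd w a c = sigma_odd w a b + sigma_odd w b c"
    and "sigma_even w a c = sigma_even w a b + sigma_even w b c"
proof -
  have e1: "{i\<in>{a<..c}. odd i} = {i\<in>{a<..b}. odd i} \<union> {i\<in>{b<..c}. odd i}"
    using assms by auto
  have e2: "{i\<in>{a<..c}. even i} = {i\<in>{a<..b}. even i} \<union> {i\<in>{b<..c}. even i}"
    using assms by auto
  show "sigma_odd w a c = sigma_odd w a b + sigma_odd w b c"
    unfolding sigma_odd_def e1 by (rule sum.union_disjoint) auto
  show "sigma_even w a c = sigma_even w a b + sigma_even w b c"
    unfolding sigma_even_def e2 by (rule sum.union_disjoint) auto
qed

lemma t1: "odd (Suc b) \<Longrightarrow> {i\<in>{Suc b}. odd i} = {Suc b}" by blast
lemma t2: "\<not> odd (Suc b) \<Longrightarrow> {i\<in>{Suc b}. odd i} = {}" by blast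
lemma t3: "even (Suc b) \<Longrightarrow> {i\<in>{Suc b}. even i} = {Suc b}" by blast
lemma t4: "\<not> even (Suc b) \<Longrightarrow> {i\<in>{Suc b}. even i} = {}" by blast
lemma sig_one:
  "sigma_odd w b (Suc b) = (if odd (Suc b) then w (Suc b) else 0)"
  "sigma_even w b (Suc b) = (if even (Suc b) then w (Suc b) else 0)"
proof -
  have e: "{b<..Suc b} = {Suc b}" by auto
  show "sigma_odd w b (Suc b) = (if odd (Suc b) then w (Suc b) else 0)"
  proof (cases "odd (Suc b)")
    case True then show ?thesis unfolding sigma_odd_def e t1[OF True] by (simp only: not_False_eq_True if_True sum.insert_if finite.emptyI sum.empty empty_iff if_False add_0_right)
  next
    case False then show ?thesis unfolding sigma_odd_def e t2[OF False] by (simp only: if_False sum.empty)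
  qed
  show "sigma_even w b (Suc b) = (if even (Suc b) then w (Suc b) else 0)"
  proof (cases "even (Suc b)")
    case True then show ?thesis unfolding sigma_even_def e t3[OF True] by (simp only: not_False_eq_True if_True sum.insert_if finite.emptyI sum.empty empty_iff if_False add_0_right)
  next
    case False then show ?thesis unfolding sigma_even_def e t4[OF False] by (simp only: if_False sum.empty)
  qed
qed

lemma sig_Suc:
  assumes "a \<le> b"
  shows "sigma_odd w a (Suc b) = sigma_odd w a b + (if odd (Suc b) then w (Suc b) else 0)"
    and "sigma_even w a (Suc b) = sigma_even w a b + (if even (Suc b) then w (Suc b) else 0)"
  using sig_split[OF assms, of "Suc b" w] sig_one[of w b] by auto

lemma sig_zero: "sigma_odd w a a = 0" "sigma_even w a a = 0"
  unfolding sigma_odd_def sigma_even_def by auto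

lemma sum_par:
  "(\<Sum>i\<in>{a<..b}. w i * (if odd i then p else q)) = p * sigma_odd w a b + q * sigma_even w a b"
proof -
  have "(\<Sum>i\<in>{a<..b}. w i * (if odd i then p else q)) =
        (\<Sum>i\<in>{a<..b}. (if odd i then p * w i else q * w i))"
    by (rule sum.cong) auto
  also have "\<dots> = (\<Sum>i\<in>{a<..b} \<inter> {x. odd x}. p * w i) + (\<Sum>i\<in>{a<..b} \<inter> - {x. odd x}. q * w i)"
    by (rule sum.If_cases) auto
  also have "{a<..b} \<inter> {x. odd x} = {i\<in>{a<..b}. odd i}" by auto
  also have "{a<..b} \<inter> - {x. odd x} = {i\<in>{a<..b}. even i}" by auto
  finally show ?thesis unfolding sigma_odd_def sigma_even_def by (simp add: sum_distrib_left)
qed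

lemma sig_pos:
  assumes "a + 2 \<le> b" "\<forall>i\<in>{a<..b}. w i > 0"
  shows "sigma_odd w a b > 0" "sigma_even w a b > 0"
proof -
  have "(if odd (a+1) then a+1 else a+2) \<in> {i\<in>{a<..b}. odd i}" using assms(1) by auto
  then show "sigma_odd w a b > 0" unfolding sigma_odd_def
    by (intro sum_pos) (use assms in auto)
  have "(if even (a+1) then a+1 else a+2) \<in> {i\<in>{a<..b}. even i}" using assms(1) by auto
  then show "sigma_even w a b > 0" unfolding sigma_even_def
    by (intro sum_pos) (use assms in auto)
qed

lemma telesc:
  fixes l y :: "nat \<Rightarrow> real"
  assumes "l 0 = 0"
  shows "(\<Sum>i=1..n. (l (i-1) + l i) * y i) = (\<Sum>k=1..n-1. l k * (y k + y (k+1))) + l n * y n"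
proof (induction n)
  case 0
  then show ?case using assms by simp
next
  case (Suc n)
  show ?case
  proof (cases n)
    case 0
    then show ?thesis using assms by simp
  next
    case (Suc n')
    have "(\<Sum>k=1..Suc n - 1. l k * (y k + y (k+1))) = (\<Sum>k=1..n-1. l k * (y k + y (k+1))) + l n * (y n + y (n+1))"
      using Suc by simp
    then show ?thesis using Suc.IH by (simp add: algebra_simps)
  qed
qed

lemma sq_one:
  fixes a b :: real
  assumes "a > 0" "b > 0"
  shows "(a / sqrt (a\<^sup>2 + b\<^sup>2))\<^sup>2 + (b / sqrt (a\<^sup>2 + b\<^sup>2))\<^sup>2 = 1"
proof -
  have p: "a\<^sup>2 + b\<^sup>2 > 0" using assms by (simp add: add_pos_pos)
  have "a\<^sup>2 / (a\<^sup>2 + b\<^sup>2) + b\<^sup>2 / (a\<^sup>2 + b\<^sup>2) = 1"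
    using p assms by (simp add: add_divide_distrib[symmetric])
  then show ?thesis by (simp add: power_divide)
qed

lemma frac2:
  fixes P Q u v :: real
  assumes "P > 0" "Q > 0"
  shows "u / P + v / Q = (u * Q + v * P) / (P * Q)"
  using assms by (simp add: field_simps)

lemma junction:
  fixes a1 b1 a2 b2 :: real
  assumes "a1 > 0" "b1 > 0" "a2 > 0" "b2 > 0" "b1 * a2 \<le> b2 * a1"
  shows "(b1 / sqrt (a1\<^sup>2 + b1\<^sup>2))\<^sup>2 + (a2 / sqrt (a2\<^sup>2 + b2\<^sup>2))\<^sup>2 \<le> 1"
proof -
  have p1: "a1\<^sup>2 + b1\<^sup>2 > 0" using assms by (simp add: add_pos_pos)
  have p2: "a2\<^sup>2 + b2\<^sup>2 > 0" using assms by (simp add: add_pos_pos)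
  have "(b1 * a2)\<^sup>2 \<le> (b2 * a1)\<^sup>2"
    using assms by (intro power_mono) auto
  then have k: "b1\<^sup>2 * a2\<^sup>2 \<le> a1\<^sup>2 * b2\<^sup>2" by (simp add: power_mult_distrib mult.commute)
  have "b1\<^sup>2 * (a2\<^sup>2 + b2\<^sup>2) + a2\<^sup>2 * (a1\<^sup>2 + b1\<^sup>2) \<le> (a1\<^sup>2 + b1\<^sup>2) * (a2\<^sup>2 + b2\<^sup>2)"
    using k by (simp add: algebra_simps)
  moreover have "b1\<^sup>2 / (a1\<^sup>2 + b1\<^sup>2) + a2\<^sup>2 / (a2\<^sup>2 + b2\<^sup>2) =
     (b1\<^sup>2 * (a2\<^sup>2 + b2\<^sup>2) + a2\<^sup>2 * (a1\<^sup>2 + b1\<^sup>2)) / ((a1\<^sup>2 + b1\<^sup>2) * (a2\<^sup>2 + b2\<^sup>2))"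
    using p1 p2 by (rule frac2)
  ultimately have "b1\<^sup>2 / (a1\<^sup>2 + b1\<^sup>2) + a2\<^sup>2 / (a2\<^sup>2 + b2\<^sup>2) \<le> 1"
    using p1 p2 by (simp add: divide_le_eq_1)
  then show ?thesis by (simp add: power_divide)
qed

lemma strict_tri:
  fixes a1 b1 a2 b2 :: real
  assumes "a1 > 0" "b1 > 0" "a2 > 0" "b2 > 0" "a1 * b2 \<noteq> a2 * b1"
  shows "sqrt ((a1+a2)\<^sup>2 + (b1+b2)\<^sup>2) < sqrt (a1\<^sup>2 + b1\<^sup>2) + sqrt (a2\<^sup>2 + b2\<^sup>2)"
proof -
  have d: "(a1 * b2 - a2 * b1)\<^sup>2 > 0" using assms(5) by simp
  have "(a1*a2 + b1*b2)\<^sup>2 < (a1\<^sup>2 + b1\<^sup>2) * (a2\<^sup>2 + b2\<^sup>2)"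
    using d by (simp add: power2_eq_square algebra_simps)
  then have "a1*a2 + b1*b2 < sqrt ((a1\<^sup>2 + b1\<^sup>2) * (a2\<^sup>2 + b2\<^sup>2))"
    by (rule real_less_rsqrt)
  then have q: "a1*a2 + b1*b2 < sqrt (a1\<^sup>2 + b1\<^sup>2) * sqrt (a2\<^sup>2 + b2\<^sup>2)"
    by (simp add: real_sqrt_mult)
  have "(sqrt (a1\<^sup>2 + b1\<^sup>2) + sqrt (a2\<^sup>2 + b2\<^sup>2))\<^sup>2 =
        (a1\<^sup>2 + b1\<^sup>2) + (a2\<^sup>2 + b2\<^sup>2) + 2 * (sqrt (a1\<^sup>2 + b1\<^sup>2) * sqrt (a2\<^sup>2 + b2\<^sup>2))"
    by (simp add: power2_sum)
  then have "(a1+a2)\<^sup>2 + (b1+b2)\<^sup>2 < (sqrt (a1\<^sup>2 + b1\<^sup>2) + sqrt (a2\<^sup>2 + b2\<^sup>2))\<^sup>2"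
    using q by (simp add: power2_sum)
  then show ?thesis by (intro real_less_lsqrt) auto
qed


lemma sum_split_mid:
  fixes f :: "nat \<Rightarrow> real"
  assumes "a \<le> b" "b \<le> c"
  shows "(\<Sum>i\<in>{a<..c}. f i) = (\<Sum>i\<in>{a<..b}. f i) + (\<Sum>i\<in>{b<..c}. f i)"
proof -
  have "{a<..c} = {a<..b} \<union> {b<..c}" using assms by auto
  then show ?thesis by (simp add: sum.union_disjoint)
qed

lemma muxh_aux:
  fixes u L D :: real
  assumes "D \<noteq> 0" "L \<noteq> 0"
  shows "2 * (u * L / (2*D)) * (D / L) = u"
  using assms by (simp add: field_simps)
lemma alg1:
  fixes D X Y L u :: real
  assumes "D \<noteq> 0"
  shows "L/2 * (X - Y/D) + L/2 * ((Y + u)/D - X) = u * L / (2*D)"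
proof -
  have e: "\<And>a b. L/2 * (X - a) + L/2 * (b - X) = L/2 * (b - a)"
    unfolding right_diff_distrib by linarith
  have f: "(Y + u)/D - Y/D = u/D" by (simp add: add_divide_distrib)
  have "L/2 * (X - Y/D) + L/2 * ((Y + u)/D - X) = L/2 * ((Y + u)/D - Y/D)" by (rule e)
  also have "\<dots> = L/2 * (u/D)" unfolding f ..
  also have "\<dots> = u * L / (2*D)" by simp
  finally show ?thesis .
qed

theorem mainTheorem9:
  fixes w :: "nat \<Rightarrow> real" and m :: nat
  assumes "m \<ge> 2"
    and "\<forall>i\<in>{1..m}. w i > 0"
  shows "extremal w m \<longleftrightarrow> \<not> (\<exists>c. admissible_decomp w m 1 c)"
proof -
  have wpos: "\<And>i. 1 \<le> i \<Longrightarrow> i \<le> m \<Longrightarrow> w i > 0" using assms(2) by auto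
  have ivl: "{1..m} = {0<..m}" by auto
  define S where "S = {(\<Sum>i=1..m. w i * x i) | x :: nat \<Rightarrow> real.
                   \<forall>i. 1 \<le> i \<and> i \<le> m - 1 \<longrightarrow> (x i)\<^sup>2 + (x (i+1))\<^sup>2 \<le> 1}"
  have L1eq: "L1 w m = Sup S" unfolding L1_def S_def by simp
  have bdd: "bdd_above S"
  proof (rule bdd_aboveI)
    fix s assume "s \<in> S"
    then obtain x where s: "s = (\<Sum>i=1..m. w i * x i)"
      and F: "\<forall>i. 1 \<le> i \<and> i \<le> m - 1 \<longrightarrow> (x i)\<^sup>2 + (x (i+1))\<^sup>2 \<le> 1"
      unfolding S_def by auto
    have "w i * x i \<le> w i" if "i \<in> {1..m}" for i
    proof -
      have "(x i)\<^sup>2 \<le> 1"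
      proof (cases "i \<le> m - 1")
        case True
        then have "(x i)\<^sup>2 + (x (i+1))\<^sup>2 \<le> 1" using F that by auto
        then show ?thesis by (smt (verit) zero_le_power2)
      next
        case False
        then have im: "i = m" using that by auto
        have "m - 1 + 1 = m" using assms(1) by simp
        moreover have "(x (m-1))\<^sup>2 + (x (m-1+1))\<^sup>2 \<le> 1" using F[rule_format, of "m-1"] assms(1) by linarith
        ultimately show ?thesis using im by (smt (verit) zero_le_power2)
      qed
      then have "\<bar>x i\<bar> \<le> 1" by (simp only: abs_square_le_1)
      then have "x i \<le> 1" by linarith
      then show ?thesis using wpos[of i] that by (simp add: mult_left_le)
    qed
    then show "s \<le> (\<Sum>i=1..m. w i)" unfolding s by (rule sum_mono)
  qed
  have upper: "(\<Sum>i=1..m. w i * x i) \<le> L1 w m"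
    if "\<forall>i. 1 \<le> i \<and> i \<le> m - 1 \<longrightarrow> (x i)\<^sup>2 + (x (i+1))\<^sup>2 \<le> 1" for x
    unfolding L1eq by (rule cSup_upper[OF _ bdd]) (use that in \<open>auto simp: S_def\<close>)
  define Od where "Od = sigma_odd w 0 m"
  define Ev where "Ev = sigma_even w 0 m"
  have wpos': "\<forall>i\<in>{0<..m}. w i > 0" using wpos by auto
  have Opos: "Od > 0" and Epos: "Ev > 0" unfolding Od_def Ev_def
    using sig_pos[of 0 m w] assms(1) wpos' by auto
  have Lemp: "Lempty w m = sqrt (Od\<^sup>2 + Ev\<^sup>2)"
    unfolding Lempty_def Od_def Ev_def sigma_odd_def sigma_even_def ivl by simp
  show ?thesis
  proof
    show "extremal w m \<Longrightarrow> \<not> (\<exists>c. admissible_decomp w m 1 c)"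
    proof
      assume ext: "extremal w m" and "\<exists>c. admissible_decomp w m 1 c"
      then obtain c where ad: "admissible_decomp w m 1 c" by blast
      define k where "k = c 1"
      have ad': "c 0 = 0 \<and> c (1+1) = m \<and> (\<forall>j\<le>1. c j < c (j+1)) \<and>
          (\<forall>j\<in>{1..1+1}. c j - c (j-1) \<ge> 2) \<and>
          (\<forall>j\<in>{1..1}. (even (c j) \<longrightarrow> Delta w c j < 0) \<and> (odd (c j) \<longrightarrow> Delta w c j > 0))"
        using ad unfolding admissible_decomp_def by blast
      have c0: "c 0 = 0" using ad' by blast
      have c2: "c 2 = m" using ad' by (simp only: one_add_one)
      have q: "\<forall>j\<in>{1..1+1}. c j - c (j-1) \<ge> 2" using ad' by blast
      have d1: "c 1 - c 0 \<ge> 2" using q[rule_format, of 1] by simp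
      have d2: "c 2 - c 1 \<ge> 2" using q[rule_format, of 2] by simp
      have k2: "2 \<le> k" and km: "k + 2 \<le> m" using d1 d2 c0 c2 unfolding k_def by linarith+
      have q2: "\<forall>j\<in>{1..1}. (even (c j) \<longrightarrow> Delta w c j < 0) \<and> (odd (c j) \<longrightarrow> Delta w c j > 0)"
        using ad' by blast
      have dc: "(even (c 1) \<longrightarrow> Delta w c 1 < 0) \<and> (odd (c 1) \<longrightarrow> Delta w c 1 > 0)"
        using q2[rule_format, of 1] by simp
      define O1 where "O1 = sigma_odd w 0 k"
      define E1 where "E1 = sigma_even w 0 k"
      define O2 where "O2 = sigma_odd w k m"
      define E2 where "E2 = sigma_even w k m"
      have DeltaEq: "Delta w c 1 = E1 * O2 - E2 * O1"
        unfolding Delta_def O1_def E1_def O2_def E2_def k_def using c0 c2 by (simp add: numeral_2_eq_2)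
      have wp1: "\<forall>i\<in>{0<..k}. w i > 0" and wp2: "\<forall>i\<in>{k<..m}. w i > 0" using wpos km by auto
      have O1p: "O1 > 0" and E1p: "E1 > 0" unfolding O1_def E1_def using sig_pos[of 0 k w] k2 wp1 by auto
      have O2p: "O2 > 0" and E2p: "E2 > 0" unfolding O2_def E2_def using sig_pos[of k m w] km wp2 by auto
      have OdS: "Od = O1 + O2" and EvS: "Ev = E1 + E2"
        unfolding Od_def Ev_def O1_def O2_def E1_def E2_def using sig_split[of 0 k m w] km by auto
      define A where "A = sqrt (O1\<^sup>2 + E1\<^sup>2)"
      define B where "B = sqrt (O2\<^sup>2 + E2\<^sup>2)"
      have Ap: "A > 0" unfolding A_def using O1p by (simp add: add_pos_nonneg)
      have Bp: "B > 0" unfolding B_def using O2p by (simp add: add_pos_nonneg)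
      have A2: "A\<^sup>2 = O1\<^sup>2 + E1\<^sup>2" unfolding A_def by simp
      have B2: "B\<^sup>2 = O2\<^sup>2 + E2\<^sup>2" unfolding B_def by simp
      define x where "x i = (if i \<le> k then (if odd i then O1 / A else E1 / A)
                                 else (if odd i then O2 / B else E2 / B))" for i
      have one1: "(O1 / A)\<^sup>2 + (E1 / A)\<^sup>2 = 1" unfolding A_def by (rule sq_one[OF O1p E1p])
      have one2: "(O2 / B)\<^sup>2 + (E2 / B)\<^sup>2 = 1" unfolding B_def by (rule sq_one[OF O2p E2p])
      have feas: "\<forall>i. 1 \<le> i \<and> i \<le> m - 1 \<longrightarrow> (x i)\<^sup>2 + (x (i+1))\<^sup>2 \<le> 1"
      proof (intro allI impI)
        fix i assume i: "1 \<le> i \<and> i \<le> m - 1"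
        consider "i + 1 \<le> k" | "i = k" | "k + 1 \<le> i" by linarith
        then show "(x i)\<^sup>2 + (x (i+1))\<^sup>2 \<le> 1"
        proof cases
          case 1
          then show ?thesis unfolding x_def using one1 by (cases "odd i") (auto simp: add.commute)
        next
          case 3
          then show ?thesis unfolding x_def using one2 by (cases "odd i") (auto simp: add.commute)
        next
          case 2
          show ?thesis
          proof (cases "even k")
            case True
            then have "E1 * O2 \<le> E2 * O1" using dc DeltaEq unfolding k_def by auto
            then have "(E1 / A)\<^sup>2 + (O2 / B)\<^sup>2 \<le> 1"
              unfolding A_def B_def by (rule junction[OF O1p E1p O2p E2p])
            then show ?thesis unfolding x_def using 2 True by auto
          next
            case False
            then have "O1 * E2 \<le> O2 * E1" using dc DeltaEq unfolding k_def by (auto simp: mult.commute)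
            then have "(O1 / sqrt (E1\<^sup>2 + O1\<^sup>2))\<^sup>2 + (E2 / sqrt (E2\<^sup>2 + O2\<^sup>2))\<^sup>2 \<le> 1"
              by (rule junction[OF E1p O1p E2p O2p])
            then have "(O1 / A)\<^sup>2 + (E2 / B)\<^sup>2 \<le> 1" unfolding A_def B_def by (simp add: add.commute)
            then show ?thesis unfolding x_def using 2 False by auto
          qed
        qed
      qed
      have s1: "(\<Sum>i\<in>{0<..k}. w i * x i) = A"
      proof -
        have "(\<Sum>i\<in>{0<..k}. w i * x i) = (\<Sum>i\<in>{0<..k}. w i * (if odd i then O1 / A else E1 / A))"
          by (rule sum.cong) (auto simp: x_def)
        also have "\<dots> = O1 / A * O1 + E1 / A * E1" unfolding sum_par O1_def E1_def ..
        also have "\<dots> = (O1\<^sup>2 + E1\<^sup>2) / A" by (simp add: power2_eq_square add_divide_distrib)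
        also have "\<dots> = A" using Ap by (subst A2[symmetric]) (simp add: power2_eq_square)
        finally show ?thesis .
      qed
      have s2: "(\<Sum>i\<in>{k<..m}. w i * x i) = B"
      proof -
        have "(\<Sum>i\<in>{k<..m}. w i * x i) = (\<Sum>i\<in>{k<..m}. w i * (if odd i then O2 / B else E2 / B))"
          by (rule sum.cong) (auto simp: x_def)
        also have "\<dots> = O2 / B * O2 + E2 / B * E2" unfolding sum_par O2_def E2_def ..
        also have "\<dots> = (O2\<^sup>2 + E2\<^sup>2) / B" by (simp add: power2_eq_square add_divide_distrib)
        also have "\<dots> = B" using Bp by (subst B2[symmetric]) (simp add: power2_eq_square)
        finally show ?thesis .
      qed
      have "(\<Sum>i=1..m. w i * x i) = A + B"
        unfolding ivl using sum_split_mid[of 0 k m "\<lambda>i. w i * x i"] km s1 s2 by simp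
      then have "A + B \<le> L1 w m" using upper[OF feas] by simp
      moreover have "O1 * E2 \<noteq> O2 * E1"
      proof
        assume "O1 * E2 = O2 * E1"
        then have "Delta w c 1 = 0" unfolding DeltaEq by (simp add: mult.commute)
        then show False using dc by auto
      qed
      then have "sqrt ((O1+O2)\<^sup>2 + (E1+E2)\<^sup>2) < A + B"
        unfolding A_def B_def by (rule strict_tri[OF O1p E1p O2p E2p])
      ultimately have "Lempty w m < L1 w m" unfolding Lemp OdS EvS by simp
      then show False using ext unfolding extremal_def by simp
    qed
    show "\<not> (\<exists>c. admissible_decomp w m 1 c) \<Longrightarrow> extremal w m"
    proof -
      assume na: "\<not> (\<exists>c. admissible_decomp w m 1 c)"
      define L where "L = sqrt (Od\<^sup>2 + Ev\<^sup>2)"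
      have Lp: "L > 0" unfolding L_def using Opos by (simp add: add_pos_nonneg)
      have L2: "L\<^sup>2 = Od\<^sup>2 + Ev\<^sup>2" unfolding L_def by simp
      define xh where "xh (i::nat) = (if odd i then Od / L else Ev / L)" for i
      have one: "(Od / L)\<^sup>2 + (Ev / L)\<^sup>2 = 1" unfolding L_def by (rule sq_one[OF Opos Epos])
      have xh1: "(xh i)\<^sup>2 + (xh (i+1))\<^sup>2 = 1" for i
        unfolding xh_def using one by (cases "odd i") (auto simp: add.commute)
      have feas: "\<forall>i. 1 \<le> i \<and> i \<le> m - 1 \<longrightarrow> (xh i)\<^sup>2 + (xh (i+1))\<^sup>2 \<le> 1" using xh1 by simp
      have valh: "(\<Sum>i=1..m. w i * xh i) = L"
      proof -
        have "(\<Sum>i=1..m. w i * xh i) = Od / L * Od + Ev / L * Ev"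
          unfolding ivl xh_def sum_par Od_def Ev_def ..
        also have "\<dots> = (Od\<^sup>2 + Ev\<^sup>2) / L" by (simp add: power2_eq_square add_divide_distrib)
        also have "\<dots> = L" using Lp by (subst L2[symmetric]) (simp add: power2_eq_square)
        finally show ?thesis .
      qed
      have lowL: "L \<le> L1 w m" using upper[OF feas] valh by simp
      define mu where "mu i = (if odd i then w i * L / (2*Od) else w i * L / (2*Ev))" for i
      define lam where "lam k = L/2 * (if even k then sigma_even w 0 k / Ev - sigma_odd w 0 k / Od
                                        else sigma_odd w 0 k / Od - sigma_even w 0 k / Ev)" for k
      have lam0: "lam 0 = 0" unfolding lam_def by (simp add: sig_zero)
      have lamm: "lam m = 0" unfolding lam_def using Opos Epos by (simp add: Od_def[symmetric] Ev_def[symmetric])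
      have mueq: "mu i = lam (i-1) + lam i" if i1: "1 \<le> i" for i
      proof -
        obtain j where j: "i = Suc j" using i1 by (cases i) auto
        have ij: "i - 1 = j" using j by simp
        show ?thesis
        proof (cases "odd i")
          case True
          then have ej: "even j" using j by simp
          have a: "lam j = L/2 * (sigma_even w 0 j / Ev - sigma_odd w 0 j / Od)"
            unfolding lam_def using ej by simp
          have b: "lam i = L/2 * ((sigma_odd w 0 j + w i) / Od - sigma_even w 0 j / Ev)"
            unfolding lam_def j using ej sig_Suc[of 0 j w] by simp
          have c: "mu i = w i * L / (2*Od)" unfolding mu_def using True by simp
          have d: "L/2 * (sigma_even w 0 j / Ev - sigma_odd w 0 j/Od) + L/2 * ((sigma_odd w 0 j + w i)/Od - sigma_even w 0 j / Ev) = w i * L / (2*Od)"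
            by (rule alg1) (use Opos in simp)
          show ?thesis unfolding c ij using a b d by linarith
        next
          case False
          then have ej: "odd j" using j by simp
          have a: "lam j = L/2 * (sigma_odd w 0 j / Od - sigma_even w 0 j / Ev)"
            unfolding lam_def using ej by simp
          have b: "lam i = L/2 * ((sigma_even w 0 j + w i) / Ev - sigma_odd w 0 j / Od)"
            unfolding lam_def j using ej sig_Suc[of 0 j w] by simp
          have c: "mu i = w i * L / (2*Ev)" unfolding mu_def using False by simp
          have d: "L/2 * (sigma_odd w 0 j / Od - sigma_even w 0 j/Ev) + L/2 * ((sigma_even w 0 j + w i)/Ev - sigma_odd w 0 j / Od) = w i * L / (2*Ev)"
            by (rule alg1) (use Epos in simp)
          show ?thesis unfolding c ij using a b d by linarith
        qed
      qed
      have mu_nn: "mu i \<ge> 0" if "1 \<le> i" "i \<le> m" for i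
        unfolding mu_def using wpos[OF that] Lp Opos Epos by simp
      have muxh: "2 * mu i * xh i = w i" for i
        unfolding mu_def xh_def using Lp Opos Epos muxh_aux[where D=Od and L=L and u="w i"] muxh_aux[where D=Ev and L=L and u="w i"] by simp
      have lam_nn: "lam k \<ge> 0" if kk: "1 \<le> k" "k \<le> m - 1" for k
      proof -
        consider "k = 1" | "k = m - 1" | "2 \<le> k \<and> k + 2 \<le> m" using kk by linarith
        then show ?thesis
        proof cases
          case 1
          have "mu 1 = lam (1-1) + lam 1" by (rule mueq) simp
          then have "mu 1 = lam 1" using lam0 by simp
          moreover have "mu 1 \<ge> 0" by (rule mu_nn) (use assms(1) in auto)
          ultimately show ?thesis using 1 by simp
        next
          case 2
          have "mu m = lam (m-1) + lam m" by (rule mueq) (use assms(1) in simp)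
          then have "mu m = lam (m-1)" using lamm by simp
          moreover have "mu m \<ge> 0" by (rule mu_nn) (use assms(1) in auto)
          ultimately show ?thesis using 2 by simp
        next
          case 3
          show ?thesis
          proof (rule ccontr)
            assume neg: "\<not> lam k \<ge> 0"
            define c :: "nat \<Rightarrow> nat" where "c j = (if j = 0 then 0 else if j = 1 then k else m)" for j
            define O1 where "O1 = sigma_odd w 0 k"
            define E1 where "E1 = sigma_even w 0 k"
            define O2 where "O2 = sigma_odd w k m"
            define E2 where "E2 = sigma_even w k m"
            have OdS: "Od = O1 + O2" and EvS: "Ev = E1 + E2"
              unfolding Od_def Ev_def O1_def O2_def E1_def E2_def using sig_split[of 0 k m w] 3 by auto
            have DeltaEq: "Delta w c 1 = E1 * O2 - E2 * O1"
            proof -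
              have "c 0 = 0" "c 1 = k" "c (Suc (Suc 0)) = m" unfolding c_def by auto
              then show ?thesis unfolding Delta_def O1_def E1_def O2_def E2_def by simp
            qed
            have dc: "(even k \<longrightarrow> Delta w c 1 < 0) \<and> (odd k \<longrightarrow> Delta w c 1 > 0)"
            proof (cases "even k")
              case True
              have "L/2 * (E1 / Ev - O1 / Od) < 0" using neg True unfolding lam_def E1_def O1_def by simp
              then have "E1 / Ev < O1 / Od" using Lp by (simp add: mult_less_0_iff)
              then have "E1 * Od < O1 * Ev" using Opos Epos by (simp add: field_simps)
              then have "E1 * O2 < E2 * O1" unfolding OdS EvS by (simp add: algebra_simps)
              then show ?thesis using True DeltaEq by simp
            next
              case False
              have "L/2 * (O1 / Od - E1 / Ev) < 0" using neg False unfolding lam_def E1_def O1_def by simp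
              then have "O1 / Od < E1 / Ev" using Lp by (simp add: mult_less_0_iff)
              then have "O1 * Ev < E1 * Od" using Opos Epos by (simp add: field_simps)
              then have "E2 * O1 < E1 * O2" unfolding OdS EvS by (simp add: algebra_simps)
              then show ?thesis using False DeltaEq by simp
            qed
            have "admissible_decomp w m 1 c"
              unfolding admissible_decomp_def
            proof (intro conjI)
              show "c 0 = 0" "c (1+1) = m" unfolding c_def by auto
              show "\<forall>j\<le>1. c j < c (j+1)" unfolding c_def using 3 by auto
              show "\<forall>j\<in>{1..1+1}. c j - c (j-1) \<ge> 2" unfolding c_def using 3 by auto
              show "\<forall>j\<in>{1..1}. (even (c j) \<longrightarrow> Delta w c j < 0) \<and> (odd (c j) \<longrightarrow> Delta w c j > 0)"
                using dc by (simp add: c_def)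
            qed
            then show False using na by blast
          qed
        qed
      qed
      have key: "(\<Sum>i=1..m. w i * x i) \<le> L"
        if F: "\<forall>i. 1 \<le> i \<and> i \<le> m - 1 \<longrightarrow> (x i)\<^sup>2 + (x (i+1))\<^sup>2 \<le> 1" for x
      proof -
        have tel: "(\<Sum>i=1..m. mu i * y i) = (\<Sum>k=1..m-1. lam k * (y k + y (k+1)))" for y
        proof -
          have "(\<Sum>i=1..m. mu i * y i) = (\<Sum>i=1..m. (lam (i-1) + lam i) * y i)"
            by (rule sum.cong) (auto simp: mueq)
          also have "\<dots> = (\<Sum>k=1..m-1. lam k * (y k + y (k+1))) + lam m * y m"
            by (rule telesc[of lam, OF lam0])
          finally show ?thesis using lamm by simp
        qed
        have t1: "(\<Sum>i=1..m. w i * x i) \<le> (\<Sum>i=1..m. mu i * (xh i)\<^sup>2 + mu i * (x i)\<^sup>2)"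
        proof (rule sum_mono)
          fix i assume i: "i \<in> {1..m}"
          have sq: "2 * xh i * x i \<le> (xh i)\<^sup>2 + (x i)\<^sup>2"
            using zero_le_power2[of "xh i - x i"] unfolding power2_diff by linarith
          have "w i * x i = mu i * (2 * xh i * x i)" using muxh[of i] by (simp add: algebra_simps)
          also have "\<dots> \<le> mu i * ((xh i)\<^sup>2 + (x i)\<^sup>2)"
            using mu_nn[of i] i sq by (intro mult_left_mono) auto
          finally show "w i * x i \<le> mu i * (xh i)\<^sup>2 + mu i * (x i)\<^sup>2" by (simp add: algebra_simps)
        qed
        have t2: "(\<Sum>i=1..m. mu i * (xh i)\<^sup>2 + mu i * (x i)\<^sup>2)
                 = (\<Sum>i=1..m. mu i * (xh i)\<^sup>2) + (\<Sum>i=1..m. mu i * (x i)\<^sup>2)"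
          by (rule sum.distrib)
        have t3: "(\<Sum>i=1..m. mu i * (x i)\<^sup>2) \<le> (\<Sum>k=1..m-1. lam k)"
        proof -
          have "(\<Sum>i=1..m. mu i * (x i)\<^sup>2) = (\<Sum>k=1..m-1. lam k * ((x k)\<^sup>2 + (x (k+1))\<^sup>2))"
            using tel[of "\<lambda>i. (x i)\<^sup>2"] by simp
          also have "\<dots> \<le> (\<Sum>k=1..m-1. lam k)"
          proof (rule sum_mono)
            fix k assume k: "k \<in> {1..m-1}"
            then show "lam k * ((x k)\<^sup>2 + (x (k+1))\<^sup>2) \<le> lam k"
              using F lam_nn[of k] by (intro mult_left_le) auto
          qed
          finally show ?thesis .
        qed
        have t4: "(\<Sum>k=1..m-1. lam k) = (\<Sum>i=1..m. mu i * (xh i)\<^sup>2)"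
          using tel[of "\<lambda>i. (xh i)\<^sup>2"] xh1 by simp
        have t5: "(\<Sum>i=1..m. mu i * (xh i)\<^sup>2) = L / 2"
        proof -
          have "(\<Sum>i=1..m. mu i * (xh i)\<^sup>2) = (\<Sum>i=1..m. w i * xh i / 2)"
            by (rule sum.cong) (auto simp: muxh[symmetric] power2_eq_square)
          also have "\<dots> = (\<Sum>i=1..m. w i * xh i) / 2" by (simp add: sum_divide_distrib)
          finally show ?thesis using valh by simp
        qed
        show ?thesis using t1 t2 t3 t4 t5 by linarith
      qed
      have "L1 w m \<le> L"
        unfolding L1eq
      proof (rule cSup_least)
        show "S \<noteq> {}" unfolding S_def using feas by blast
        show "\<And>s. s \<in> S \<Longrightarrow> s \<le> L" unfolding S_def using key by blast
      qed
      then show "extremal w m" unfolding extremal_def Lemp L_def[symmetric] using lowL by simp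
    qed
  qed
qed

end
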